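(* Let $A\in\mathsf{M}_n(\mathbb{C})$ be $h$-cyclic with consecutive partition $P=\{V_1,\dots,V_h\}$. Let $i\in\{1,\dots,h\}$, $x\in\mathbb{C}^{|V_i|}$, and let $v\in\mathbb{C}^n$, partitioned conformably with $P$ as $v=(v_1,\dots,v_h)$ with $v_k\in\mathbb{C}^{|V_k|}$, be defined by $v_i=x$ and $v_k=0$ for $k\neq i$. Then for every positive integer $p$, the $k$-th block of $A^pv$ equals $B_{ip}x$ if $k=\alpha^{-p}(i)$ and equals $0$ if $k\neq\alpha^{-p}(i)$.
   Context: $P=\{V_1,\dots,V_h\}$ is a consecutive partition of $\{1,\dots,n\}$ into nonempty sets: $V_1=\{1,\dots,i_1\}$, $V_2=\{i_1+1,\dots,i_2\}$, \dots, $V_h=\{i_{h-1}+1,\dots,n\}$. $A_{ij}$ denotes the submatrix $A(V_i,V_j)$. $A$ being $h$-cyclic with partition $P$ means $A_{ij}=0$ unless $j\equiv i+1\pmod h$, so the only possibly nonzero blocks are $A_{12},\dots,A_{h-1,h},A_{h1}$. Let $\alpha$ be the permutation of $\{1,\dots,h\}$ given by $\alpha(i)=(i\bmod h)+1$ (so $\alpha^{-1}(i)=i-1$ for $i>1$ and $\alpha^{-1}(1)=h$). For $i\in\{1,\dots,h\}$ and $p\in\mathbb{N}$, $B_{ip}:=\prod_{j=h+1-p}^{h}A_{\alpha^{j-1}(i),\alpha^{j}(i)}$, the product taken in increasing order of $j$. *)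

theory Defs
  imports "Jordan_Normal_Form.Matrix"
begin

text \<open>Consecutive partition of the (0-indexed) entry positions 0..n-1 into h nonempty
  blocks; block k (for k = 1..h) is the index range b (k-1) ..< b k.\<close>
definition consec_part :: "nat \<Rightarrow> nat \<Rightarrow> (nat \<Rightarrow> nat) \<Rightarrow> bool" where
  "consec_part n h b \<longleftrightarrow> h \<ge> 1 \<and> b 0 = 0 \<and> b h = n \<and> (\<forall>k<h. b k < b (Suc k))"

definition bsz :: "(nat \<Rightarrow> nat) \<Rightarrow> nat \<Rightarrow> nat" where
  "bsz b k = b k - b (k - 1)"

definition blk :: "'a mat \<Rightarrow> (nat \<Rightarrow> nat) \<Rightarrow> nat \<Rightarrow> nat \<Rightarrow> 'a mat" where
  "blk A b k l = mat (bsz b k) (bsz b l) (\<lambda>(r, c). A $$ (b (k - 1) + r, b (l - 1) + c))"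

definition vblk :: "'a vec \<Rightarrow> (nat \<Rightarrow> nat) \<Rightarrow> nat \<Rightarrow> 'a vec" where
  "vblk w b k = vec (bsz b k) (\<lambda>r. w $ (b (k - 1) + r))"

definition alpha :: "nat \<Rightarrow> nat \<Rightarrow> nat" where
  "alpha h i = (i mod h) + 1"

definition alpha_inv :: "nat \<Rightarrow> nat \<Rightarrow> nat" where
  "alpha_inv h i = (if i = 1 then h else i - 1)"

definition alpha_pow :: "nat \<Rightarrow> int \<Rightarrow> nat \<Rightarrow> nat" where
  "alpha_pow h j i = (if j \<ge> 0 then (alpha h ^^ nat j) i else (alpha_inv h ^^ nat (- j)) i)"

definition h_cyclic :: "nat \<Rightarrow> nat \<Rightarrow> (nat \<Rightarrow> nat) \<Rightarrow> 'a::zero mat \<Rightarrow> bool" where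
  "h_cyclic n h b A \<longleftrightarrow> A \<in> carrier_mat n n \<and> consec_part n h b \<and>
     (\<forall>k\<in>{1..h}. \<forall>l\<in>{1..h}. l \<noteq> alpha h k \<longrightarrow> blk A b k l = 0\<^sub>m (bsz b k) (bsz b l))"

definition Bmat :: "nat \<Rightarrow> (nat \<Rightarrow> nat) \<Rightarrow> 'a::semiring_1 mat \<Rightarrow> nat \<Rightarrow> nat \<Rightarrow> 'a mat" where
  "Bmat h b A i p = foldr (\<lambda>j M. blk A b (alpha_pow h (j - 1) i) (alpha_pow h j i) * M)
      [int h + 1 - int p .. int h] (1\<^sub>m (bsz b i))"

end

theory Submission
  imports Defs
begin

lemma cp_mono:
  assumes "consec_part n h b" "k \<le> l" "l \<le> h"
  shows "b k \<le> b l"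
  using assms(2,3)
proof (induction l)
  case 0 then show ?case by simp
next
  case (Suc l)
  show ?case
  proof (cases "k = Suc l")
    case False
    then have "b k \<le> b l" using Suc by simp
    moreover have "b l < b (Suc l)" using assms(1) Suc.prems unfolding consec_part_def by auto
    ultimately show ?thesis by simp
  qed simp
qed

lemma cp_locate:
  assumes cp: "consec_part n h b" and c: "c < n"
  shows "\<exists>l\<in>{1..h}. b (l - 1) \<le> c \<and> c < b l"
proof -
  define l where "l = (LEAST l. c < b l)"
  have ex: "c < b h" using cp c unfolding consec_part_def by auto
  have l1: "c < b l" unfolding l_def by (rule LeastI[of _ h], rule ex)
  have l2: "l \<le> h" unfolding l_def by (rule Least_le, rule ex)
  have l3: "l \<noteq> 0"
  proof
    assume "l = 0" then show False using l1 cp by (simp add: consec_part_def)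
  qed
  have l4: "\<not> c < b (l - 1)" unfolding l_def
    by (rule not_less_Least) (use l3 l_def in auto)
  show ?thesis using l1 l2 l3 l4 by (intro bexI[of _ l]) auto
qed

lemma cp_unique:
  assumes cp: "consec_part n h b" and "l \<in> {1..h}" "l' \<in> {1..h}"
    and "b (l - 1) \<le> c" "c < b l" "b (l' - 1) \<le> c" "c < b l'"
  shows "l = l'"
proof (rule ccontr)
  assume ne: "l \<noteq> l'"
  show False
  proof (cases "l < l'")
    case True
    have "b l \<le> b (l' - 1)" by (rule cp_mono[OF cp]) (use assms True in auto)
    then show False using assms by auto
  next
    case False
    have "b l' \<le> b (l - 1)" by (rule cp_mono[OF cp]) (use assms ne False in auto)
    then show False using assms by auto
  qed
qed

lemma alpha_range: "h \<ge> 1 \<Longrightarrow> alpha h k \<in> {1..h}"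
  unfolding alpha_def by (auto simp: Suc_le_eq)

lemma ainv_range: "y \<in> {1..h} \<Longrightarrow> alpha_inv h y \<in> {1..h}"
  unfolding alpha_inv_def by auto

lemma alpha_ainv: "y \<in> {1..h} \<Longrightarrow> alpha h (alpha_inv h y) = y"
  unfolding alpha_def alpha_inv_def by auto

lemma ainv_alpha: "y \<in> {1..h} \<Longrightarrow> alpha_inv h (alpha h y) = y"
  unfolding alpha_def alpha_inv_def
  by (cases "y = h") auto

lemma alpha_funpow: "i \<in> {1..h} \<Longrightarrow> (alpha h ^^ m) i = (i - 1 + m) mod h + 1"
proof (induction m)
  case 0
  have "i - 1 < h" using 0 by auto
  then show ?case using 0 by simp
next
  case (Suc m)
  then show ?case by (simp add: alpha_def mod_Suc_eq)
qed

lemma alpha_funpow_range: "i \<in> {1..h} \<Longrightarrow> (alpha h ^^ m) i \<in> {1..h}"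
  by (induction m) (use alpha_range[of h] in auto)

lemma ainv_funpow_range: "i \<in> {1..h} \<Longrightarrow> (alpha_inv h ^^ m) i \<in> {1..h}"
proof (induction m)
  case (Suc m) then show ?case using ainv_range[of "(alpha_inv h ^^ m) i" h] by simp
qed simp

lemma apow_range: "i \<in> {1..h} \<Longrightarrow> alpha_pow h j i \<in> {1..h}"
  unfolding alpha_pow_def using alpha_funpow_range ainv_funpow_range by auto

lemma apow_pred:
  assumes i: "i \<in> {1..h}"
  shows "alpha_pow h (j - 1) i = alpha_inv h (alpha_pow h j i)"
proof (cases "j \<ge> 1")
  case True
  then have "nat j = Suc (nat (j - 1))" by simp
  then show ?thesis using True unfolding alpha_pow_def
    using ainv_alpha[OF alpha_funpow_range[OF i]] by simp
next
  case False
  then have "nat (- (j - 1)) = Suc (nat (- j))" by simp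
  then show ?thesis using False unfolding alpha_pow_def by simp
qed

lemma apow_period:
  assumes i: "i \<in> {1..h}"
  shows "alpha_pow h (int h - int m) i = alpha_pow h (- int m) i"
proof (induction m)
  case 0
  have "(alpha h ^^ h) i = i" using alpha_funpow[OF i, of h] i by auto
  then show ?case unfolding alpha_pow_def by simp
next
  case (Suc m)
  have e: "int h - int (Suc m) = (int h - int m) - 1" by simp
  have "alpha_pow h (int h - int (Suc m)) i = alpha_pow h ((int h - int m) - 1) i" by (simp only: e)
  also have "\<dots> = alpha_inv h (alpha_pow h (int h - int m) i)" by (rule apow_pred[OF i])
  also have "\<dots> = alpha_inv h (alpha_pow h (- int m) i)" using Suc by simp
  also have "\<dots> = alpha_pow h (- int m - 1) i" by (rule apow_pred[OF i, symmetric])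
  also have "- int m - 1 = - int (Suc m)" by simp
  finally show ?case .
qed

lemma pow_mat_Suc_left:
  assumes A: "(A :: 'a :: semiring_1 mat) \<in> carrier_mat n n"
  shows "A ^\<^sub>m Suc p = A * A ^\<^sub>m p"
proof (induction p)
  case 0 then show ?case using A by simp
next
  case (Suc p)
  have "A ^\<^sub>m Suc (Suc p) = (A * A ^\<^sub>m p) * A" using Suc by simp
  also have "\<dots> = A * (A ^\<^sub>m p * A)"
    by (rule assoc_mult_mat[OF A pow_carrier_mat[OF A] A])
  finally show ?case by simp
qed

lemma blk_carrier: "blk A b k l \<in> carrier_mat (bsz b k) (bsz b l)"
  unfolding blk_def by simp

lemma mult_zero_vec_right:
  assumes "(M :: 'a :: semiring_0 mat) \<in> carrier_mat r c"
  shows "M *\<^sub>v 0\<^sub>v c = 0\<^sub>v r"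
  using assms by (intro eq_vecI) (auto simp: row_def)

lemma block_mult:
  assumes cyc: "h_cyclic n h b A" and w: "w \<in> carrier_vec n" and k: "k \<in> {1..h}"
  shows "vblk (A *\<^sub>v w) b k = blk A b k (alpha h k) *\<^sub>v vblk w b (alpha h k)"
proof -
  have An: "A \<in> carrier_mat n n" and cp: "consec_part n h b" using cyc unfolding h_cyclic_def by auto
  have h1: "h \<ge> 1" using cp unfolding consec_part_def by auto
  define l where "l = alpha h k"
  have l: "l \<in> {1..h}" unfolding l_def using alpha_range[OF h1] .
  have bk: "b k \<le> n" using cp_mono[OF cp, of k h] k cp unfolding consec_part_def by auto
  have bl: "b l \<le> n" using cp_mono[OF cp, of l h] l cp unfolding consec_part_def by auto
  have bl1: "b (l - 1) \<le> b l" using cp_mono[OF cp, of "l - 1" l] l by auto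
  show ?thesis
  proof (intro eq_vecI)
    show "dim_vec (vblk (A *\<^sub>v w) b k) = dim_vec (blk A b k (alpha h k) *\<^sub>v vblk w b (alpha h k))"
      unfolding vblk_def blk_def by simp
  next
    fix r assume "r < dim_vec (blk A b k (alpha h k) *\<^sub>v vblk w b (alpha h k))"
    then have r: "r < bsz b k" unfolding blk_def by simp
    have rn: "b (k - 1) + r < n" using r bk unfolding bsz_def by auto
    have "vblk (A *\<^sub>v w) b k $ r = (A *\<^sub>v w) $ (b (k - 1) + r)"
      unfolding vblk_def using r by simp
    also have "\<dots> = (\<Sum>c = 0..<n. A $$ (b (k - 1) + r, c) * w $ c)"
      using rn An w by (simp add: scalar_prod_def row_def)
    also have "\<dots> = (\<Sum>c \<in> {b (l - 1)..<b l}. A $$ (b (k - 1) + r, c) * w $ c)"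
    proof (rule sum.mono_neutral_right)
      show "finite {0..<n}" by simp
      show "{b (l - 1)..<b l} \<subseteq> {0..<n}" using bl by auto
      show "\<forall>c\<in>{0..<n} - {b (l - 1)..<b l}. A $$ (b (k - 1) + r, c) * w $ c = 0"
      proof
        fix c assume c: "c \<in> {0..<n} - {b (l - 1)..<b l}"
        then obtain l' where l': "l' \<in> {1..h}" "b (l' - 1) \<le> c" "c < b l'"
          using cp_locate[OF cp, of c] by auto
        have "l' \<noteq> l" using c l' by auto
        then have z: "blk A b k l' = 0\<^sub>m (bsz b k) (bsz b l')"
          using cyc k l' unfolding h_cyclic_def l_def by auto
        have cl: "c - b (l' - 1) < bsz b l'" using l' unfolding bsz_def by auto
        have "blk A b k l' $$ (r, c - b (l' - 1)) = 0" using z r cl by simp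
        then have "A $$ (b (k - 1) + r, c) = 0" unfolding blk_def using r cl l' by simp
        then show "A $$ (b (k - 1) + r, c) * w $ c = 0" by simp
      qed
    qed
    also have "\<dots> = (\<Sum>c = 0..<bsz b l. A $$ (b (k - 1) + r, b (l - 1) + c) * w $ (b (l - 1) + c))"
    proof -
      have "{b (l - 1)..<b l} = (\<lambda>c. b (l - 1) + c) ` {0..<bsz b l}"
        using bl1 unfolding bsz_def by (auto simp: image_iff intro!: exI[of _ "_ - b (l - 1)"])
      then have "(\<Sum>c \<in> {b (l - 1)..<b l}. A $$ (b (k - 1) + r, c) * w $ c)
         = (\<Sum>c \<in> (\<lambda>c. b (l - 1) + c) ` {0..<bsz b l}. A $$ (b (k - 1) + r, c) * w $ c)"
        by (simp only:)
      also have "\<dots> = (\<Sum>c = 0..<bsz b l. A $$ (b (k - 1) + r, b (l - 1) + c) * w $ (b (l - 1) + c))"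
        by (subst sum.reindex) (auto simp: inj_on_def)
      finally show ?thesis .
    qed
    also have "\<dots> = (blk A b k l *\<^sub>v vblk w b l) $ r"
      using r by (simp add: blk_def vblk_def scalar_prod_def row_def)
    finally show "vblk (A *\<^sub>v w) b k $ r = (blk A b k (alpha h k) *\<^sub>v vblk w b (alpha h k)) $ r"
      unfolding l_def .
  qed
qed

lemma Bmat_Suc:
  assumes i: "i \<in> {1..h}"
  shows "Bmat h b A i (Suc p) = blk A b (alpha_pow h (- int (Suc p)) i) (alpha_pow h (- int p) i) * Bmat h b A i p"
proof -
  have e1: "int h + 1 - int (Suc p) = int h - int p" by simp
  have e2: "int h - int p + 1 = int h + 1 - int p" by simp
  have e3: "int h - int p - 1 = int h - int (Suc p)" by simp
  have "[int h + 1 - int (Suc p) .. int h] = (int h - int p) # [int h + 1 - int p .. int h]"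
    unfolding e1 by (subst upto_rec1) (auto simp: e2)
  then have "Bmat h b A i (Suc p) = blk A b (alpha_pow h (int h - int p - 1) i) (alpha_pow h (int h - int p) i) * Bmat h b A i p"
    unfolding Bmat_def by simp
  then show ?thesis unfolding e3 apow_period[OF i] .
qed

lemma Bmat_carrier:
  assumes i: "i \<in> {1..h}"
  shows "Bmat h b A i p \<in> carrier_mat (bsz b (alpha_pow h (- int p) i)) (bsz b i)"
proof (induction p)
  case 0
  have "Bmat h b A i 0 = 1\<^sub>m (bsz b i)" unfolding Bmat_def by simp
  then show ?case unfolding alpha_pow_def by simp
next
  case (Suc p)
  show ?case unfolding Bmat_Suc[OF i]
    by (rule mult_carrier_mat[OF blk_carrier Suc])
qed

theorem lemma5p2:
  fixes A :: "complex mat" and n h :: nat and b :: "nat \<Rightarrow> nat" and i :: nat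
    and x :: "complex vec" and v :: "complex vec"
  assumes cyc: "h_cyclic n h b A"
    and i: "i \<in> {1..h}"
    and x: "x \<in> carrier_vec (bsz b i)"
    and v: "v = vec n (\<lambda>r. if b (i - 1) \<le> r \<and> r < b i then x $ (r - b (i - 1)) else 0)"
  shows "\<forall>p \<ge> 1. \<forall>k \<in> {1..h}.
           vblk (A ^\<^sub>m p *\<^sub>v v) b k =
             (if k = alpha_pow h (- int p) i then Bmat h b A i p *\<^sub>v x else 0\<^sub>v (bsz b k))"
proof -
  have An: "A \<in> carrier_mat n n" and cp: "consec_part n h b" using cyc unfolding h_cyclic_def by auto
  have h1: "h \<ge> 1" using cp unfolding consec_part_def by auto
  have vc: "v \<in> carrier_vec n" using v by simp
  have main: "\<forall>k \<in> {1..h}. vblk (A ^\<^sub>m p *\<^sub>v v) b k =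
             (if k = alpha_pow h (- int p) i then Bmat h b A i p *\<^sub>v x else 0\<^sub>v (bsz b k))" for p
  proof (induction p)
    case 0
    show ?case
    proof
      fix k assume k: "k \<in> {1..h}"
      have bk: "b k \<le> n" using cp_mono[OF cp, of k h] k cp unfolding consec_part_def by auto
      have B0: "Bmat h b A i 0 = 1\<^sub>m (bsz b i)" unfolding Bmat_def by simp
      have a0: "alpha_pow h (- int 0) i = i" unfolding alpha_pow_def by simp
      have "vblk v b k = (if k = i then x else 0\<^sub>v (bsz b k))"
      proof (intro eq_vecI)
        fix r assume "r < dim_vec (if k = i then x else 0\<^sub>v (bsz b k))"
        then have r: "r < bsz b k" using x by (cases "k = i") auto
        have rn: "b (k - 1) + r < n" "b (k - 1) + r < b k" using r bk unfolding bsz_def by auto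
        show "vblk v b k $ r = (if k = i then x else 0\<^sub>v (bsz b k)) $ r"
        proof (cases "k = i")
          case True
          then show ?thesis using r rn unfolding vblk_def v by simp
        next
          case False
          have "\<not> (b (i - 1) \<le> b (k - 1) + r \<and> b (k - 1) + r < b i)"
            using cp_unique[OF cp k i, of "b (k - 1) + r"] rn False by auto
          then show ?thesis using r rn False unfolding vblk_def v by auto
        qed
      qed (use x in \<open>auto simp: vblk_def\<close>)
      then show "vblk (A ^\<^sub>m 0 *\<^sub>v v) b k =
             (if k = alpha_pow h (- int 0) i then Bmat h b A i 0 *\<^sub>v x else 0\<^sub>v (bsz b k))"
        unfolding a0 B0 using An vc x by simp
    qed
  next
    case (Suc p)
    show ?case
    proof
      fix k assume k: "k \<in> {1..h}"
      have ak: "alpha h k \<in> {1..h}" using alpha_range[OF h1] .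
      have w: "A ^\<^sub>m p *\<^sub>v v \<in> carrier_vec n"
        by (rule mult_mat_vec_carrier[OF pow_carrier_mat[OF An] vc])
      have "A ^\<^sub>m Suc p *\<^sub>v v = A *\<^sub>v (A ^\<^sub>m p *\<^sub>v v)"
        unfolding pow_mat_Suc_left[OF An] using An vc by (simp add: assoc_mult_mat_vec[OF An pow_carrier_mat[OF An] vc])
      then have eq: "vblk (A ^\<^sub>m Suc p *\<^sub>v v) b k
          = blk A b k (alpha h k) *\<^sub>v vblk (A ^\<^sub>m p *\<^sub>v v) b (alpha h k)"
        using block_mult[OF cyc w k] by simp
      have ap: "alpha_pow h (- int p) i \<in> {1..h}" using apow_range[OF i] .
      have apS: "alpha_pow h (- int (Suc p)) i = alpha_inv h (alpha_pow h (- int p) i)"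
      proof -
        have "- int (Suc p) = - int p - 1" by simp
        then show ?thesis using apow_pred[OF i, of "- int p"] by (simp only:)
      qed
      show "vblk (A ^\<^sub>m Suc p *\<^sub>v v) b k =
             (if k = alpha_pow h (- int (Suc p)) i then Bmat h b A i (Suc p) *\<^sub>v x else 0\<^sub>v (bsz b k))"
      proof (cases "alpha h k = alpha_pow h (- int p) i")
        case True
        have kk: "k = alpha_pow h (- int (Suc p)) i"
          unfolding apS True[symmetric] ainv_alpha[OF k] ..
        have Bc: "Bmat h b A i p \<in> carrier_mat (bsz b (alpha h k)) (bsz b i)"
          using Bmat_carrier[OF i, of b A p] True by simp
        have "vblk (A ^\<^sub>m Suc p *\<^sub>v v) b k = blk A b k (alpha h k) *\<^sub>v (Bmat h b A i p *\<^sub>v x)"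
          unfolding eq using Suc.IH ak True by simp
        also have "\<dots> = (blk A b k (alpha h k) * Bmat h b A i p) *\<^sub>v x"
          by (rule assoc_mult_mat_vec[OF blk_carrier Bc x, symmetric])
        also have "\<dots> = Bmat h b A i (Suc p) *\<^sub>v x"
          unfolding Bmat_Suc[OF i] True[symmetric] kk[symmetric] ..
        finally show ?thesis using kk by simp
      next
        case False
        have kk: "k \<noteq> alpha_pow h (- int (Suc p)) i"
          using False alpha_ainv[OF ap] apS by auto
        have "vblk (A ^\<^sub>m Suc p *\<^sub>v v) b k = blk A b k (alpha h k) *\<^sub>v 0\<^sub>v (bsz b (alpha h k))"
          unfolding eq using Suc.IH ak False by simp
        also have "\<dots> = 0\<^sub>v (bsz b k)" by (rule mult_zero_vec_right[OF blk_carrier])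
        finally show ?thesis using kk by simp
      qed
    qed
  qed
  then show ?thesis by blast
qed

end
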